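(* Let $G$ and $\ell$ be as in the construction described in the context. If for some $q\in[t]$ the instance $(X,\mathcal{S}_q)$ of \textsc{Exact-3-Cover} is a Yes-instance, then $G$ has an acyclic matching of size $\ell$.
   Context: Construction. Let $n=3c$ with $c\in\mathbb{N}$, $X=[n]$, and let $(X,\mathcal{S}_1),\dots,(X,\mathcal{S}_t)$ be instances of \textsc{Exact-3-Cover} (each $\mathcal{S}_i$ a collection of 3-element subsets of $X$, all $\mathcal{S}_i$ of the same size $m$ and pairwise distinct as collections). An instance $(X,\mathcal{S})$ is a Yes-instance if some subcollection of $\mathcal{S}$ covers every element of $X$ exactly once. Let $\mathcal{C}=\bigcup_{i\in[t]}\mathcal{S}_i=\{s_1,\dots,s_{|\mathcal{C}|}\}$ (distinct 3-sets). The graph $G$: a vertex set $X'=\{v_a:a\in X\}$; for each $s_j=\{a,b,c\}\in\mathcal{C}$ a set gadget $Q_j$ with vertices $u_{ja},u_{jb},u_{jc}$ (interface vertices), $u_j,w_j,u_j',w_j'$, where each of $u_j,w_j$ is adjacent to each of $u_{ja},u_{jb},u_{jc}$, and additionally $u_jw_j,u_ju_j',w_jw_j'$ are edges; for each $s_j\in\mathcal{C}$ and $d\in s_j$ the edge $u_{jd}v_d$ (cross edges); a vertex $p$ and vertices $P=\{p_1,\dots,p_t\}$ with edges $pp_i$ for all $i$; and for each $i\in[t]$ and each $s_j\in\mathcal{C}\setminus\mathcal{S}_i$, edges from $p_i$ to the three interface vertices of $Q_j$. There are no other edges. Set $\ell=2|\mathcal{C}|+\frac{2n}{3}+1$. A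 matching $M$ is acyclic if the subgraph induced by the endpoints of its edges is a forest. *)

theory Defs
  imports Main
begin

definition x3c_yes :: "nat set \<Rightarrow> nat set set \<Rightarrow> bool" where
  "x3c_yes X S \<longleftrightarrow> (\<exists>T \<subseteq> S. \<forall>a\<in>X. \<exists>!s. s \<in> T \<and> a \<in> s)"

section \<open>Simple graphs given by edge sets (edges are 2-element sets)\<close>

definition is_matching :: "'v set set \<Rightarrow> 'v set set \<Rightarrow> bool" where
  "is_matching E M \<longleftrightarrow> M \<subseteq> E \<and> (\<forall>e1\<in>M. \<forall>e2\<in>M. e1 \<noteq> e2 \<longrightarrow> e1 \<inter> e2 = {})"

definition induced_cycle :: "'v set set \<Rightarrow> 'v set \<Rightarrow> 'v list \<Rightarrow> bool" where
  "induced_cycle E V vs \<longleftrightarrow> length vs \<ge> 3 \<and> distinct vs \<and> set vs \<subseteq> V \<and>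
     (\<forall>i < length vs. {vs ! i, vs ! ((i + 1) mod length vs)} \<in> E)"

definition induced_forest :: "'v set set \<Rightarrow> 'v set \<Rightarrow> bool" where
  "induced_forest E V \<longleftrightarrow> \<not> (\<exists>vs. induced_cycle E V vs)"

definition acyclic_matching :: "'v set set \<Rightarrow> 'v set set \<Rightarrow> bool" where
  "acyclic_matching E M \<longleftrightarrow> is_matching E M \<and> induced_forest E (\<Union>M)"

datatype vtx =
    VX nat                 (* v_a, a \<in> X *)
  | UI "nat set" nat       (* u_{j a}: interface vertex of the gadget of set s_j for a \<in> s_j *)
  | U "nat set"            (* u_j *)
  | W "nat set"            (* w_j *)
  | U' "nat set"           (* u_j' *)
  | W' "nat set"           (* w_j' *)
  | Pv                     (* p *)
  | PI nat                 (* p_i *)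

text \<open>Gadgets are indexed by the 3-sets of C themselves (an enumeration s_1,...,s_|C| is immaterial).\<close>
definition coll_union :: "nat \<Rightarrow> (nat \<Rightarrow> nat set set) \<Rightarrow> nat set set" where
  "coll_union t S = (\<Union>i\<in>{1..t}. S i)"

definition red_edges :: "nat \<Rightarrow> (nat \<Rightarrow> nat set set) \<Rightarrow> vtx set set" where
  "red_edges t S =
     (let C = coll_union t S in
        {{U s, UI s a} | s a. s \<in> C \<and> a \<in> s}
      \<union> {{W s, UI s a} | s a. s \<in> C \<and> a \<in> s}
      \<union> {{U s, W s} | s. s \<in> C}
      \<union> {{U s, U' s} | s. s \<in> C}
      \<union> {{W s, W' s} | s. s \<in> C}
      \<union> {{UI s a, VX a} | s a. s \<in> C \<and> a \<in> s}
      \<union> {{Pv, PI i} | i. i \<in> {1..t}}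
      \<union> {{PI i, UI s a} | i s a. i \<in> {1..t} \<and> s \<in> C \<and> s \<notin> S i \<and> a \<in> s})"

definition red_ell :: "nat \<Rightarrow> nat \<Rightarrow> (nat \<Rightarrow> nat set set) \<Rightarrow> nat" where
  "red_ell c t S = 2 * card (coll_union t S) + 2 * (3 * c) div 3 + 1"

end

theory Submission
  imports Defs
begin

lemma forest_rank:
  fixes h :: "'v \<Rightarrow> nat"
  assumes neq: "\<And>x y. x \<in> V \<Longrightarrow> y \<in> V \<Longrightarrow> x \<noteq> y \<Longrightarrow> {x,y} \<in> E \<Longrightarrow> h x \<noteq> h y"
    and par: "\<And>x y z. x \<in> V \<Longrightarrow> y \<in> V \<Longrightarrow> z \<in> V \<Longrightarrow> {x,y} \<in> E \<Longrightarrow> {x,z} \<in> E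
               \<Longrightarrow> h y < h x \<Longrightarrow> h z < h x \<Longrightarrow> y = z"
  shows "induced_forest E V"
  unfolding induced_forest_def
proof
  assume "\<exists>vs. induced_cycle E V vs"
  then obtain vs where c: "induced_cycle E V vs" by blast
  define n where "n = length vs"
  have n3: "n \<ge> 3" and dist: "distinct vs" and sub: "set vs \<subseteq> V"
    and ed: "\<And>i. i < n \<Longrightarrow> {vs ! i, vs ! ((i + 1) mod n)} \<in> E"
    using c unfolding induced_cycle_def n_def by auto
  have "finite (h ` set vs)" by simp
  moreover have "h ` set vs \<noteq> {}" using n3 n_def by auto
  ultimately have "Max (h ` set vs) \<in> h ` set vs" by (rule Max_in)
  then obtain i where i: "i < n" "h (vs ! i) = Max (h ` set vs)"
    by (metis imageE in_set_conv_nth n_def)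
  have mx: "\<And>j. j < n \<Longrightarrow> h (vs ! j) \<le> h (vs ! i)"
    using i n_def by auto
  have hm: "(i + 1) mod n = (if i + 1 < n then i + 1 else 0)"
  proof (cases "i + 1 < n")
    case False
    hence "i + 1 = n" using i by simp
    thus ?thesis by simp
  qed simp
  define a where "a = (i + 1) mod n"
  define b where "b = (i + n - 1) mod n"
  have a: "a < n" using n3 a_def by auto
  have b: "b < n" using n3 b_def by auto
  have ba: "(b + 1) mod n = i"
  proof -
    have "(b + 1) mod n = ((i + n - 1) + 1) mod n" unfolding b_def by (simp add: mod_Suc_eq)
    also have "(i + n - 1) + 1 = i + n" using n3 by simp
    finally show ?thesis using i by simp
  qed
  have ab: "a \<noteq> b"
  proof (cases "i = 0")
    case True
    then show ?thesis using n3 unfolding a_def b_def by simp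
  next
    case False
    have e: "i + n - 1 = (i - 1) + n" using False i by simp
    have bb: "b = i - 1" unfolding b_def e using i by simp
    show ?thesis
    proof (cases "i + 1 < n")
      case True then show ?thesis using bb unfolding a_def by simp
    next
      case False
      hence "i + 1 = n" using i by simp
      then show ?thesis using bb n3 unfolding a_def by simp
    qed
  qed
  have e1: "{vs ! i, vs ! a} \<in> E" using ed[OF i(1)] a_def by simp
  have e2: "{vs ! i, vs ! b} \<in> E" using ed[OF b] ba by (simp add: insert_commute)
  have vi: "vs ! i \<in> V" "vs ! a \<in> V" "vs ! b \<in> V" using sub i a b n_def by auto
  have nia: "vs ! i \<noteq> vs ! a"
  proof
    assume "vs ! i = vs ! a"
    hence "i = a" using dist i a n_def nth_eq_iff_index_eq by blast
    thus False using n3 i hm unfolding a_def by (auto split: if_splits)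
  qed
  have nib: "vs ! i \<noteq> vs ! b"
  proof
    assume "vs ! i = vs ! b"
    hence "i = b" using dist i b n_def nth_eq_iff_index_eq by blast
    hence "(i + 1) mod n = i" using ba by simp
    thus False using n3 i hm by (auto split: if_splits)
  qed
  have "h (vs ! a) < h (vs ! i)" using neq[OF vi(1) vi(2) nia e1] mx[OF a] by simp
  moreover have "h (vs ! b) < h (vs ! i)" using neq[OF vi(1) vi(3) nib e2] mx[OF b] by simp
  ultimately have "vs ! a = vs ! b" using par[OF vi e1 e2] by simp
  hence "a = b" using dist a b n_def nth_eq_iff_index_eq by blast
  thus False using ab by simp
qed

fun rk :: "vtx \<Rightarrow> nat" where
  "rk (VX _) = 2" | "rk (UI _ _) = 1" | "rk (U _) = 0" | "rk (W _) = 1"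
| "rk (U' _) = 1" | "rk (W' _) = 2" | "rk Pv = 0" | "rk (PI _) = 1"

fun er :: "nat set set \<Rightarrow> nat \<Rightarrow> (nat \<Rightarrow> nat set set) \<Rightarrow> vtx \<Rightarrow> vtx \<Rightarrow> bool" where
  "er C t S (U s) (UI s' a) = (s' = s \<and> s \<in> C \<and> a \<in> s)"
| "er C t S (W s) (UI s' a) = (s' = s \<and> s \<in> C \<and> a \<in> s)"
| "er C t S (U s) (W s') = (s' = s \<and> s \<in> C)"
| "er C t S (U s) (U' s') = (s' = s \<and> s \<in> C)"
| "er C t S (W s) (W' s') = (s' = s \<and> s \<in> C)"
| "er C t S (UI s a) (VX b) = (b = a \<and> s \<in> C \<and> a \<in> s)"
| "er C t S Pv (PI i) = (i \<in> {1..t})"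
| "er C t S (PI i) (UI s a) = (i \<in> {1..t} \<and> s \<in> C \<and> s \<notin> S i \<and> a \<in> s)"
| "er C t S _ _ = False"

lemma er_edge:
  assumes "{x, y} \<in> red_edges t S"
  shows "er (coll_union t S) t S x y \<or> er (coll_union t S) t S y x"
  using assms unfolding red_edges_def Let_def
  by (auto simp: doubleton_eq_iff)

theorem lemma14:
  fixes c t m q :: nat and S :: "nat \<Rightarrow> nat set set"
  assumes sets3: "\<And>i. i \<in> {1..t} \<Longrightarrow> S i \<subseteq> {s. s \<subseteq> {1..3 * c} \<and> card s = 3}"
    and same_size: "\<And>i. i \<in> {1..t} \<Longrightarrow> card (S i) = m"
    and distinct_inst: "inj_on S {1..t}"
    and q: "q \<in> {1..t}"
    and yes: "x3c_yes {1..3 * c} (S q)"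
  shows "\<exists>M. acyclic_matching (red_edges t S) M \<and> card M = red_ell c t S"
proof -
  define C where "C = coll_union t S"
  define X where "X = {1..3*c}"
  obtain T where TS: "T \<subseteq> S q" and cov: "\<forall>a\<in>X. \<exists>!s. s \<in> T \<and> a \<in> s"
    using yes unfolding x3c_yes_def X_def by blast
  have SqC: "S q \<subseteq> C" using q unfolding C_def coll_union_def by blast
  have TC: "T \<subseteq> C" using TS SqC by blast
  have Csub: "\<And>s. s \<in> C \<Longrightarrow> s \<subseteq> X \<and> card s = 3"
    using sets3 unfolding C_def coll_union_def X_def by blast
  have finC: "finite C"
  proof -
    have "C \<subseteq> Pow X" using Csub by blast
    thus ?thesis unfolding X_def by (meson finite_Pow_iff finite_atLeastAtMost finite_subset)
  qed
  have finT: "finite T" using TC finC finite_subset by blast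
  have Tsub: "\<And>s. s \<in> T \<Longrightarrow> s \<subseteq> X \<and> card s = 3" using TC Csub by blast
  have uniq: "\<And>s s' a. s \<in> T \<Longrightarrow> s' \<in> T \<Longrightarrow> a \<in> s \<Longrightarrow> a \<in> s' \<Longrightarrow> s = s'"
    using cov Tsub by blast
  have XT: "\<And>a. a \<in> X \<longleftrightarrow> (\<exists>s\<in>T. a \<in> s)" using cov Tsub by blast
  define M1 where "M1 = {{U s, U' s} | s. s \<in> C}"
  define M2 where "M2 = {{W s, W' s} | s. s \<in> C - T}"
  define M3 where "M3 = {{UI s a, VX a} | s a. s \<in> T \<and> a \<in> s}"
  define M where "M = M1 \<union> M2 \<union> M3 \<union> {{Pv, PI q}}"
  define E where "E = red_edges t S"
  have ME: "M \<subseteq> E"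
  proof -
    have "M1 \<subseteq> E" unfolding M1_def E_def red_edges_def Let_def C_def[symmetric] by blast
    moreover have "M2 \<subseteq> E" unfolding M2_def E_def red_edges_def Let_def C_def[symmetric] by blast
    moreover have "M3 \<subseteq> {{UI s a, VX a} | s a. s \<in> C \<and> a \<in> s}" unfolding M3_def using TC by blast
    moreover have "{{UI s a, VX a} | s a. s \<in> C \<and> a \<in> s} \<subseteq> E"
      unfolding E_def red_edges_def Let_def C_def[symmetric] by (rule subsetI) (simp only: Un_iff simp_thms)
    moreover have "{Pv, PI q} \<in> E" unfolding E_def red_edges_def Let_def using q by blast
    ultimately show ?thesis unfolding M_def by (meson Un_least subset_trans insert_subset empty_subsetI)
  qed
  have Mdisj: "\<forall>e1\<in>M. \<forall>e2\<in>M. e1 \<noteq> e2 \<longrightarrow> e1 \<inter> e2 = {}"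
    unfolding M_def M1_def M2_def M3_def using uniq by blast
  have U1: "\<Union>M1 = U ` C \<union> U' ` C" unfolding M1_def by blast
  have U2: "\<Union>M2 = W ` (C - T) \<union> W' ` (C - T)" unfolding M2_def by blast
  have U3: "\<Union>M3 = {UI s a | s a. s \<in> T \<and> a \<in> s} \<union> VX ` X"
  proof (rule set_eqI, rule iffI)
    fix x assume "x \<in> \<Union>M3"
    then obtain s a where sa: "s \<in> T" "a \<in> s" "x \<in> {UI s a, VX a}" unfolding M3_def by blast
    hence "a \<in> X" using XT by blast
    thus "x \<in> {UI s a | s a. s \<in> T \<and> a \<in> s} \<union> VX ` X" using sa by blast
  next
    fix x assume "x \<in> {UI s a | s a. s \<in> T \<and> a \<in> s} \<union> VX ` X"
    then consider s a where "s \<in> T" "a \<in> s" "x = UI s a" | a where "a \<in> X" "x = VX a" by blast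
    thus "x \<in> \<Union>M3"
    proof cases
      case 1
      hence "{UI s a, VX a} \<in> M3" unfolding M3_def by blast
      thus ?thesis using 1 by blast
    next
      case 2
      then obtain s where "s \<in> T" "a \<in> s" using XT by blast
      hence "{UI s a, VX a} \<in> M3" unfolding M3_def by blast
      thus ?thesis using 2 by blast
    qed
  qed
  have UM: "\<Union>M = U ` C \<union> U' ` C \<union> W ` (C - T) \<union> W' ` (C - T)
      \<union> {UI s a | s a. s \<in> T \<and> a \<in> s} \<union> VX ` X \<union> {Pv, PI q}"
    unfolding M_def Union_Un_distrib U1 U2 U3 by auto
  have Vchar: "x \<in> \<Union>M \<longleftrightarrow> (case x of VX a \<Rightarrow> a \<in> X | UI s a \<Rightarrow> s \<in> T \<and> a \<in> s
       | U s \<Rightarrow> s \<in> C | U' s \<Rightarrow> s \<in> C | W s \<Rightarrow> s \<in> C \<and> s \<notin> T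
       | W' s \<Rightarrow> s \<in> C \<and> s \<notin> T | Pv \<Rightarrow> True | PI i \<Rightarrow> i = q)" for x
    unfolding UM by (cases x) auto
  have Ee: "{x, y} \<in> E \<Longrightarrow> er C t S x y \<or> er C t S y x" for x y
    unfolding E_def C_def by (rule er_edge)
  have lower: "x \<in> \<Union>M \<Longrightarrow> y \<in> \<Union>M \<Longrightarrow> er C t S x y \<or> er C t S y x \<Longrightarrow> rk y < rk x \<Longrightarrow>
     (case x of VX a \<Rightarrow> (\<exists>s. y = UI s a \<and> s \<in> T \<and> a \<in> s) | UI s a \<Rightarrow> y = U s
       | W s \<Rightarrow> y = U s | U' s \<Rightarrow> y = U s | W' s \<Rightarrow> y = W s | PI i \<Rightarrow> y = Pv | _ \<Rightarrow> False)" for x y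
    unfolding Vchar by (cases x; cases y) auto
  have forest: "induced_forest E (\<Union>M)"
  proof (rule forest_rank[where h = rk])
    fix x y assume a: "x \<in> \<Union>M" "y \<in> \<Union>M" "x \<noteq> y" "{x, y} \<in> E"
    from Ee[OF a(4)] a(1-3) show "rk x \<noteq> rk y"
      unfolding Vchar using TS by (cases x; cases y) auto
  next
    fix x y z assume a: "x \<in> \<Union>M" "y \<in> \<Union>M" "z \<in> \<Union>M" "{x, y} \<in> E" "{x, z} \<in> E"
      "rk y < rk x" "rk z < rk x"
    have ly: "case x of VX a \<Rightarrow> (\<exists>s. y = UI s a \<and> s \<in> T \<and> a \<in> s) | UI s a \<Rightarrow> y = U s
       | W s \<Rightarrow> y = U s | U' s \<Rightarrow> y = U s | W' s \<Rightarrow> y = W s | PI i \<Rightarrow> y = Pv | _ \<Rightarrow> False"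
      using lower[OF a(1) a(2) Ee[OF a(4)] a(6)] .
    have lz: "case x of VX a \<Rightarrow> (\<exists>s. z = UI s a \<and> s \<in> T \<and> a \<in> s) | UI s a \<Rightarrow> z = U s
       | W s \<Rightarrow> z = U s | U' s \<Rightarrow> z = U s | W' s \<Rightarrow> z = W s | PI i \<Rightarrow> z = Pv | _ \<Rightarrow> False"
      using lower[OF a(1) a(3) Ee[OF a(5)] a(7)] .
    show "y = z" using ly lz uniq by (cases x) auto
  qed
  have finX: "finite X" unfolding X_def by simp
  define SG where "SG = (SIGMA s:T. s)"
  have finSG: "finite SG" unfolding SG_def using finT Tsub finX
    by (meson finite_SigmaI finite_subset)
  have cSG1: "card SG = 3 * card T"
  proof -
    have "card SG = (\<Sum>s\<in>T. card s)" unfolding SG_def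
      using finT Tsub finX by (subst card_SigmaI) (auto intro: finite_subset)
    also have "\<dots> = (\<Sum>s\<in>T. 3)" using Tsub by simp
    finally show ?thesis by simp
  qed
  have "bij_betw snd SG X"
    unfolding bij_betw_def SG_def inj_on_def using uniq XT by (auto simp: image_iff; force)
  hence "card SG = card X" by (rule bij_betw_same_card)
  hence cT: "card T = c" using cSG1 unfolding X_def by simp
  have c1: "card M1 = card C"
    unfolding M1_def using card_image[of "\<lambda>s. {U s, U' s}" C]
    by (simp add: Setcompr_eq_image inj_on_def doubleton_eq_iff)
  have c2: "card M2 = card C - card T"
  proof -
    have "M2 = (\<lambda>s. {W s, W' s}) ` (C - T)" unfolding M2_def by auto
    moreover have "inj_on (\<lambda>s. {W s, W' s}) (C - T)" by (simp add: inj_on_def doubleton_eq_iff)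
    ultimately have "card M2 = card (C - T)" by (simp add: card_image)
    thus ?thesis using TC finT by (simp add: card_Diff_subset)
  qed
  have M3img: "M3 = (\<lambda>(s, a). {UI s a, VX a}) ` SG"
  proof (rule set_eqI, rule iffI)
    fix e assume "e \<in> M3"
    then obtain s a where sa: "s \<in> T" "a \<in> s" "e = {UI s a, VX a}" unfolding M3_def by blast
    hence "(s, a) \<in> SG" unfolding SG_def by blast
    thus "e \<in> (\<lambda>(s, a). {UI s a, VX a}) ` SG" using sa by (simp add: rev_image_eqI)
  next
    fix e assume "e \<in> (\<lambda>(s, a). {UI s a, VX a}) ` SG"
    then obtain p where p: "p \<in> SG" "e = (\<lambda>(s, a). {UI s a, VX a}) p" by blast
    obtain s a where "p = (s, a)" by (cases p)
    with p show "e \<in> M3" unfolding M3_def SG_def by blast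
  qed
  have c3: "card M3 = card SG"
  proof -
    have "M3 = (\<lambda>(s, a). {UI s a, VX a}) ` SG" by (rule M3img)
    moreover have "inj_on (\<lambda>(s, a). {UI s a, VX a}) SG"
      unfolding inj_on_def by (clarsimp simp: doubleton_eq_iff)
    ultimately show ?thesis using card_image by metis
  qed
  have fM1: "finite M1" unfolding M1_def using finC by simp
  have fM2: "finite M2"
  proof -
    have "M2 = (\<lambda>s. {W s, W' s}) ` (C - T)" unfolding M2_def by auto
    thus ?thesis using finC by simp
  qed
  have fM3: "finite M3"
  proof -
    have "M3 = (\<lambda>(s, a). {UI s a, VX a}) ` SG" by (rule M3img)
    thus ?thesis using finSG by simp
  qed
  have cM: "card M = card M1 + card M2 + card M3 + 1"
  proof -
    have d1: "M1 \<inter> M2 = {}" unfolding M1_def M2_def by (auto simp: doubleton_eq_iff)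
    have d2: "(M1 \<union> M2) \<inter> M3 = {}" unfolding M1_def M2_def M3_def by (auto simp: doubleton_eq_iff)
    have d3: "{Pv, PI q} \<notin> M1 \<union> M2 \<union> M3" unfolding M1_def M2_def M3_def by (auto simp: doubleton_eq_iff)
    have "card M = card (M1 \<union> M2 \<union> M3) + 1"
      unfolding M_def using d3 fM1 fM2 fM3 by simp
    also have "card (M1 \<union> M2 \<union> M3) = card (M1 \<union> M2) + card M3"
      using d2 fM1 fM2 fM3 by (simp add: card_Un_disjoint)
    also have "card (M1 \<union> M2) = card M1 + card M2"
      using d1 fM1 fM2 by (simp add: card_Un_disjoint)
    finally show ?thesis .
  qed
  have TleC: "card T \<le> card C" using TC finC by (simp add: card_mono)
  have "card M = red_ell c t S"
    unfolding cM c1 c2 c3 red_ell_def C_def[symmetric] using cSG1 cT TleC by simp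
  moreover have "acyclic_matching (red_edges t S) M"
    unfolding acyclic_matching_def is_matching_def E_def[symmetric] using ME Mdisj forest by blast
  ultimately show ?thesis by blast
qed

end
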